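(* Let $S$ be a compact metrizable space, let $\boldsymbol{X} = (X_0, X_1,\dots)$ be a sequence of $S$-valued random variables on a probability space $(\Omega,\mathscr F,\mathbb P)$, and let $\boldsymbol{\xi} = (\xi_0, \xi_1,\dots)$ be a product disintegration of $\boldsymbol{X}$. Let $f\colon S\to\mathbb{R}$ be continuous. Then \[ \mathbb{P}\left(\lim_{n\to\infty} \frac1n\sum_{i=0}^{n-1}\big(f( X_i) - \xi_i(f)\big) = 0\right)= 1. \] In particular, the limit $X_\infty(f)\coloneqq \lim_{n\to\infty} n^{-1}\sum_{i=0}^{n-1}f( X_i)$ exists almost surely if and only if the limit $\xi_\infty(f)\coloneqq \lim_{n\to\infty}n^{-1}\sum_{i=0}^{n-1}\xi_i(f)$ exists almost surely, in which case $X_\infty(f) = \xi_\infty(f)$ almost surely.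
   Context: $M_1(S)$ denotes the set of Borel probability measures on $S$, equipped with the weak topology and its Borel $\sigma$-field; a random probability measure on $S$ is a measurable map $\xi\colon\Omega\to M_1(S)$. For $\mu\in M_1(S)$ and $f\in C(S)$, $\mu(f)\coloneqq\int_S f\,d\mu$. A sequence $\boldsymbol\xi=(\xi_0,\xi_1,\dots)$ of random probability measures on $S$ is a product disintegration of $\boldsymbol X$ if, with probability one, $\mathbb{P}[X_0\in A_0,\dots,X_n\in A_n\mid \boldsymbol{\xi}] = \xi_0(A_0)\cdots\xi_n(A_n)$ holds simultaneously for every $n\ge 0$ and every family $A_0,\dots,A_n$ of Borel subsets of $S$ (conditioning is on $\sigma(\boldsymbol\xi)$). *)

theory Defs
  imports "HOL-Probability.Probability"
begin

text \<open>The sigma-field generated by the sequence of random probability measures xi,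
  where the space of probability measures carries the Giry (evaluation) sigma-algebra
  prob_algebra borel, which for compact metrizable S is the Borel sigma-field of the weak topology.\<close>
definition sigma_of_seq :: "'b measure \<Rightarrow> (nat \<Rightarrow> 'b \<Rightarrow> 'a::topological_space measure) \<Rightarrow> 'b measure" where
  "sigma_of_seq M \<xi> =
     vimage_algebra (space M) (\<lambda>\<omega> i. \<xi> i \<omega>) (PiM UNIV (\<lambda>_. prob_algebra (borel :: 'a measure)))"

definition product_disintegration ::
  "'b measure \<Rightarrow> (nat \<Rightarrow> 'b \<Rightarrow> 'a::topological_space) \<Rightarrow> (nat \<Rightarrow> 'b \<Rightarrow> 'a measure) \<Rightarrow> bool" where
  "product_disintegration M X \<xi> \<longleftrightarrow>
     (\<forall>i. \<xi> i \<in> M \<rightarrow>\<^sub>M prob_algebra borel) \<and>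
     (\<forall>n (A :: nat \<Rightarrow> 'a set). (\<forall>i\<le>n. A i \<in> sets borel) \<longrightarrow>
        (AE \<omega> in M. real_cond_exp M (sigma_of_seq M \<xi>)
              (indicator {\<omega>'\<in>space M. \<forall>i\<le>n. X i \<omega>' \<in> A i}) \<omega>
            = (\<Prod>i\<le>n. measure (\<xi> i \<omega>) (A i))))"

end

theory Submission
  imports Defs
begin


lemma sq_bracket: "n \<ge> 1 \<Longrightarrow> \<exists>j\<ge>1. j\<^sup>2 \<le> n \<and> n < (j+1)\<^sup>2" for n :: nat
proof (induction n rule: nat_induct_at_least)
  case base
  show ?case by (rule exI[of _ 1]) (simp add: power2_eq_square)
next
  case (Suc n)
  then obtain j where j: "j \<ge> 1" "j\<^sup>2 \<le> n" "n < (j+1)\<^sup>2" by blast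
  show ?case
  proof (cases "Suc n < (j+1)\<^sup>2")
    case True then show ?thesis using j by (intro exI[of _ j]) auto
  next
    case False
    then have e: "Suc n = (j+1)\<^sup>2" using j by linarith
    have "(j+1)\<^sup>2 < (j+2)\<^sup>2" by (simp add: power_strict_mono)
    then show ?thesis using e by (intro exI[of _ "j+1"]) auto
  qed
qed

lemma det_slln:
  fixes y :: "nat \<Rightarrow> real"
  assumes yb: "\<And>i. \<bar>y i\<bar> \<le> C"
    and lim: "(\<lambda>k. (\<Sum>i<(Suc k)\<^sup>2. y i) / real ((Suc k)\<^sup>2)) \<longlonglongrightarrow> 0"
  shows "(\<lambda>n. (\<Sum>i<n. y i) / real n) \<longlonglongrightarrow> 0"
proof (rule LIMSEQ_I)
  fix r :: real assume r: "r > 0"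
  have C0: "C \<ge> 0" using yb[of 0] by linarith
  obtain K1 where K1: "\<And>k. k \<ge> K1 \<Longrightarrow> norm ((\<Sum>i<(Suc k)\<^sup>2. y i) / real ((Suc k)\<^sup>2) - 0) < r / 2"
    using LIMSEQ_D[OF lim, of "r/2"] r by auto
  obtain K2 :: nat where K2: "4 * C / r < real K2" using reals_Archimedean2 by blast
  define K where "K = max K1 K2"
  show "\<exists>no. \<forall>n\<ge>no. norm ((\<Sum>i<n. y i) / real n - 0) < r"
  proof (intro exI[of _ "(Suc K)\<^sup>2"] allI impI)
    fix n assume n: "(Suc K)\<^sup>2 \<le> n"
    then have n1: "n \<ge> 1" by (metis One_nat_def le_trans one_le_power Suc_le_mono zero_le)
    obtain j where j: "j \<ge> 1" "j\<^sup>2 \<le> n" "n < (j+1)\<^sup>2" using sq_bracket[OF n1] by blast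
    have jK: "j \<ge> Suc K"
    proof (rule ccontr)
      assume "\<not> ?thesis"
      then have "j + 1 \<le> Suc K" by simp
      then have "(j+1)\<^sup>2 \<le> (Suc K)\<^sup>2" by (rule power_mono) simp
      then show False using j n by linarith
    qed
    obtain k where k: "j = Suc k" using j by (cases j) auto
    have kK: "k \<ge> K1" "k \<ge> K2" using jK k unfolding K_def by auto
    have A: "\<bar>(\<Sum>i<j\<^sup>2. y i) / real (j\<^sup>2)\<bar> < r / 2" using K1[OF kK(1)] k by simp
    have split: "(\<Sum>i<n. y i) = (\<Sum>i<j\<^sup>2. y i) + (\<Sum>i\<in>{j\<^sup>2..<n}. y i)"
      using sum.atLeastLessThan_concat[of 0 "j\<^sup>2" n y] j by (simp add: atLeast0LessThan)
    have "\<bar>\<Sum>i\<in>{j\<^sup>2..<n}. y i\<bar> \<le> (\<Sum>i\<in>{j\<^sup>2..<n}. \<bar>y i\<bar>)" by (rule sum_abs)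
    also have "\<dots> \<le> real (card {j\<^sup>2..<n}) * C" by (rule sum_bounded_above) (rule yb)
    also have "\<dots> \<le> real (2 * j) * C"
    proof -
      have "card {j\<^sup>2..<n} \<le> 2 * j" using j by (simp add: power2_eq_square algebra_simps)
      then show ?thesis using C0 by (intro mult_right_mono) auto
    qed
    finally have B: "\<bar>\<Sum>i\<in>{j\<^sup>2..<n}. y i\<bar> \<le> 2 * real j * C" by simp
    have jp: "real j > 0" using j by simp
    have nj: "real (j\<^sup>2) \<le> real n" using j by linarith
    have jsq: "real (j\<^sup>2) > 0" using jp by simp
    have "\<bar>(\<Sum>i<n. y i) / real n\<bar> \<le> \<bar>\<Sum>i<j\<^sup>2. y i\<bar> / real n + \<bar>\<Sum>i\<in>{j\<^sup>2..<n}. y i\<bar> / real n"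
      unfolding split by (simp add: add_divide_distrib[symmetric] abs_triangle_ineq divide_right_mono)
    also have "\<dots> \<le> \<bar>\<Sum>i<j\<^sup>2. y i\<bar> / real (j\<^sup>2) + (2 * real j * C) / real (j\<^sup>2)"
      by (intro add_mono divide_left_mono frac_le B nj jsq) (use C0 jp in auto)
    also have "(2 * real j * C) / real (j\<^sup>2) = 2 * C / real j"
      using jp by (simp add: power2_eq_square field_simps)
    finally have X0: "\<bar>(\<Sum>i<n. y i) / real n\<bar> \<le> \<bar>\<Sum>i<j\<^sup>2. y i\<bar> / real (j\<^sup>2) + 2 * C / real j" .
    have Q: "2 * C / real j < r / 2"
    proof -
      have "real j > 4 * C / r" using K2 kK k by linarith
      then have "real j * r > 4 * C" using r by (simp add: field_simps)
      then show ?thesis using jp r by (simp add: field_simps)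
    qed
    have X: "\<bar>(\<Sum>i<n. y i) / real n\<bar> < \<bar>\<Sum>i<j\<^sup>2. y i\<bar> / real (j\<^sup>2) + r / 2" using X0 Q by linarith
    have A': "\<bar>\<Sum>i<j\<^sup>2. y i\<bar> / real (j\<^sup>2) < r / 2" using A by (simp only: abs_divide abs_of_nat)
    from X A' have "\<bar>(\<Sum>i<n. y i) / real n\<bar> < r" by linarith
    then show "norm ((\<Sum>i<n. y i) / real n - 0) < r" by simp
  qed
qed



lemma (in prob_space) abs_int_le:
  fixes f :: "_ \<Rightarrow> real"
  assumes f[measurable]: "f \<in> borel_measurable M" and b: "\<And>x. x \<in> space M \<Longrightarrow> \<bar>f x\<bar> \<le> C"
  shows "\<bar>integral\<^sup>L M f\<bar> \<le> C" "integrable M f"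
proof -
  show i: "integrable M f"
    by (rule integrable_const_bound[where B=C]) (auto intro!: AE_I2 simp: b)
  have ic: "integrable M (\<lambda>x. C)" by simp
  have "integral\<^sup>L M f \<le> (\<integral>x. C \<partial>M)"
    by (rule integral_mono[OF i ic]) (use b in fastforce)
  moreover have "(\<integral>x. - f x \<partial>M) \<le> (\<integral>x. C \<partial>M)"
    by (rule integral_mono[OF _ ic]) (use b i in fastforce)+
  ultimately show "\<bar>integral\<^sup>L M f\<bar> \<le> C" by (simp add: prob_space)
qed

locale pdis =
  fixes M :: "'b measure"
    and X :: "nat \<Rightarrow> 'b \<Rightarrow> 'a::metric_space"
    and \<xi> :: "nat \<Rightarrow> 'b \<Rightarrow> 'a measure"
  assumes prob: "prob_space M"
    and Xm[measurable]: "\<And>i. X i \<in> M \<rightarrow>\<^sub>M borel"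
    and pd: "product_disintegration M X \<xi>"
begin

interpretation prob_space M by (rule prob)

abbreviation "F \<equiv> sigma_of_seq M \<xi>"

lemma xim[measurable]: "\<xi> i \<in> M \<rightarrow>\<^sub>M prob_algebra borel"
  using pd unfolding product_disintegration_def by auto

lemma xi_space: "\<omega> \<in> space M \<Longrightarrow> prob_space (\<xi> i \<omega>) \<and> sets (\<xi> i \<omega>) = sets borel"
  using measurable_space[OF xim] by (auto simp: space_prob_algebra)

lemma Xi_map: "(\<lambda>\<omega> i. \<xi> i \<omega>) \<in> M \<rightarrow>\<^sub>M PiM UNIV (\<lambda>_. prob_algebra borel)"
  by (rule measurable_PiM_single') (auto intro: measurable_space[OF xim])

lemma subalg: "subalgebra M F"
  unfolding subalgebra_def sigma_of_seq_def
  using sets_image_in_sets[OF refl Xi_map] by auto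

lemma fms: "finite_measure_subalgebra M F"
  by (simp add: finite_measure_axioms finite_measure_subalgebra.intro finite_measure_subalgebra_axioms_def subalg)

lemma xiF[measurable]: "\<xi> i \<in> F \<rightarrow>\<^sub>M prob_algebra borel"
proof -
  have "(\<lambda>\<omega> i. \<xi> i \<omega>) \<in> F \<rightarrow>\<^sub>M PiM UNIV (\<lambda>_. prob_algebra borel)"
    unfolding sigma_of_seq_def using measurable_space[OF Xi_map]
    by (intro measurable_vimage_algebra1) auto
  from measurable_compose[OF this measurable_component_singleton[of i UNIV]]
  show ?thesis by simp
qed

lemma intF[measurable]: "g \<in> borel_measurable borel \<Longrightarrow> (\<lambda>\<omega>. integral\<^sup>L (\<xi> i \<omega>) g :: real) \<in> borel_measurable F"
  using measurable_compose[OF measurable_prob_algebraD[OF xiF] integral_measurable_subprob_algebra] by auto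

lemma measF[measurable]: "A \<in> sets borel \<Longrightarrow> (\<lambda>\<omega>. measure (\<xi> i \<omega>) A) \<in> borel_measurable F"
  using measurable_compose[OF xiF measurable_measure_prob_algebra] by auto

lemma WM: "W \<in> borel_measurable F \<Longrightarrow> W \<in> borel_measurable M"
  by (rule measurable_from_subalg[OF subalg])

lemma xi_UNIV: "\<omega> \<in> space M \<Longrightarrow> measure (\<xi> i \<omega>) UNIV = 1"
proof -
  assume "\<omega> \<in> space M"
  then have "prob_space (\<xi> i \<omega>)" "sets (\<xi> i \<omega>) = sets borel" using xi_space by auto
  moreover have "space (\<xi> i \<omega>) = UNIV" using sets_eq_imp_space_eq[OF \<open>sets (\<xi> i \<omega>) = sets borel\<close>] by simp
  ultimately show ?thesis using prob_space.prob_space by fastforce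
qed

lemma ind2:
  assumes ab: "a < b" and A[measurable]: "A \<in> sets borel" and B[measurable]: "B \<in> sets borel"
    and W[measurable]: "W \<in> borel_measurable F" and Wb: "\<And>\<omega>. \<omega> \<in> space M \<Longrightarrow> \<bar>W \<omega>\<bar> \<le> K"
  shows "(\<integral>\<omega>. W \<omega> * (indicator A (X a \<omega>) * indicator B (X b \<omega>)) \<partial>M)
       = (\<integral>\<omega>. W \<omega> * (measure (\<xi> a \<omega>) A * measure (\<xi> b \<omega>) B) \<partial>M)"
proof -
  interpret fms: finite_measure_subalgebra M F by (rule fms)
  have WM'[measurable]: "W \<in> borel_measurable M" using WM[OF W] .
  define A' where "A' i = (if i = a then A else if i = b then B else UNIV)" for i
  have A'b: "\<forall>i\<le>b. A' i \<in> sets borel" unfolding A'_def by auto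
  define S where "S = {\<omega>'\<in>space M. \<forall>i\<le>b. X i \<omega>' \<in> A' i}"
  have ae: "AE \<omega> in M. real_cond_exp M F (indicator S) \<omega> = (\<Prod>i\<le>b. measure (\<xi> i \<omega>) (A' i))"
    using pd A'b unfolding product_disintegration_def S_def by blast
  have indS: "(indicator S \<omega> :: real) = indicator A (X a \<omega>) * indicator B (X b \<omega>)" if "\<omega> \<in> space M" for \<omega>
    using that ab unfolding S_def A'_def by (auto simp: indicator_def)
  have "(\<lambda>\<omega>. indicator A (X a \<omega>) * indicator B (X b \<omega>) :: real) \<in> borel_measurable M" by measurable
  then have indSm[measurable]: "(indicator S :: 'b \<Rightarrow> real) \<in> borel_measurable M"
    using measurable_cong[of M "indicator S" "\<lambda>\<omega>. indicator A (X a \<omega>) * indicator B (X b \<omega>)", OF indS] by simp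
  have prodA: "(\<Prod>i\<le>b. measure (\<xi> i \<omega>) (A' i)) = measure (\<xi> a \<omega>) A * measure (\<xi> b \<omega>) B"
    if "\<omega> \<in> space M" for \<omega>
  proof -
    have "(\<Prod>i\<le>b. measure (\<xi> i \<omega>) (A' i)) = (\<Prod>i\<in>{a,b}. measure (\<xi> i \<omega>) (A' i))"
      using ab xi_UNIV[OF that] by (intro prod.mono_neutral_right) (auto simp: A'_def)
    also have "\<dots> = measure (\<xi> a \<omega>) A * measure (\<xi> b \<omega>) B"
      using ab by (simp add: A'_def)
    finally show ?thesis .
  qed
  have int1: "integrable M (\<lambda>\<omega>. W \<omega> * indicator S \<omega>)"
  proof (rule integrable_const_bound[where B=K])
    show "AE x in M. norm (W x * indicator S x) \<le> K"
    proof (rule AE_I2)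
      fix x assume x: "x \<in> space M"
      have "norm (W x * indicator S x) \<le> \<bar>W x\<bar>" by (auto simp: indicator_def)
      then show "norm (W x * indicator S x) \<le> K" using Wb[OF x] by linarith
    qed
  qed measurable
  have "(\<integral>\<omega>. W \<omega> * (indicator A (X a \<omega>) * indicator B (X b \<omega>)) \<partial>M) = (\<integral>\<omega>. W \<omega> * indicator S \<omega> \<partial>M)"
    by (rule Bochner_Integration.integral_cong[OF refl]) (auto simp: indS)
  also have "\<dots> = (\<integral>\<omega>. W \<omega> * real_cond_exp M F (indicator S) \<omega> \<partial>M)"
    using fms.real_cond_exp_intg(2)[OF int1 W indSm] by simp
  also have "\<dots> = (\<integral>\<omega>. W \<omega> * (measure (\<xi> a \<omega>) A * measure (\<xi> b \<omega>) B) \<partial>M)"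
  proof (rule integral_cong_AE)
    show "(\<lambda>\<omega>. W \<omega> * real_cond_exp M F (indicator S) \<omega>) \<in> borel_measurable M" by measurable
    have "(\<lambda>\<omega>. measure (\<xi> a \<omega>) A) \<in> borel_measurable M" "(\<lambda>\<omega>. measure (\<xi> b \<omega>) B) \<in> borel_measurable M"
      using measF[OF A] measF[OF B] by (auto intro: WM)
    then show "(\<lambda>\<omega>. W \<omega> * (measure (\<xi> a \<omega>) A * measure (\<xi> b \<omega>) B)) \<in> borel_measurable M" by measurable
    show "AE \<omega> in M. W \<omega> * real_cond_exp M F (indicator S) \<omega> = W \<omega> * (measure (\<xi> a \<omega>) A * measure (\<xi> b \<omega>) B)"
      using AE_space ae by eventually_elim (simp add: prodA)
  qed
  finally show ?thesis .
qed

lemma xi_int: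
  fixes g :: "'a \<Rightarrow> real"
  assumes \<omega>: "\<omega> \<in> space M" and g: "g \<in> borel_measurable borel" and b: "\<And>x. \<bar>g x\<bar> \<le> C"
  shows "\<bar>integral\<^sup>L (\<xi> i \<omega>) g\<bar> \<le> C" "integrable (\<xi> i \<omega>) g"
proof -
  interpret P: prob_space "\<xi> i \<omega>" using xi_space[OF \<omega>] by auto
  have s: "sets (\<xi> i \<omega>) = sets borel" using xi_space[OF \<omega>] by auto
  have gm: "g \<in> borel_measurable (\<xi> i \<omega>)" using g by (subst measurable_cong_sets[OF s refl])
  show "\<bar>integral\<^sup>L (\<xi> i \<omega>) g\<bar> \<le> C" "integrable (\<xi> i \<omega>) g"
    using P.abs_int_le[OF gm b] by auto
qed

lemma intM[measurable]: "g \<in> borel_measurable borel \<Longrightarrow> (\<lambda>\<omega>. integral\<^sup>L (\<xi> i \<omega>) g :: real) \<in> borel_measurable M"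
  using intF WM by blast

lemma measM[measurable]: "A \<in> sets borel \<Longrightarrow> (\<lambda>\<omega>. measure (\<xi> i \<omega>) A) \<in> borel_measurable M"
  using measF WM by blast


lemma small_zero:
  fixes d C :: real
  assumes "\<And>m::nat. m > 0 \<Longrightarrow> \<bar>d\<bar> \<le> C / real m"
  shows "d = 0"
proof (rule ccontr)
  assume "d \<noteq> 0"
  then have dp: "\<bar>d\<bar> > 0" by simp
  obtain m :: nat where m: "C / \<bar>d\<bar> < real m" using reals_Archimedean2 by blast
  have C0: "C \<ge> 0" using assms[of 1] by simp
  then have "m > 0" using m dp by (metis divide_nonneg_pos not_le of_nat_0 neq0_conv)
  then have "\<bar>d\<bar> \<le> C / real m" by (rule assms)
  then have "\<bar>d\<bar> * real m \<le> C" using \<open>m > 0\<close> by (simp add: field_simps)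
  moreover have "C < real m * \<bar>d\<bar>" using m dp by (simp add: field_simps)
  ultimately show False by (simp add: mult.commute)
qed

lemma gen:
  fixes U V :: "'b \<Rightarrow> real" and Y :: "'b \<Rightarrow> 'a" and h :: "'a \<Rightarrow> real"
  assumes U[measurable]: "U \<in> borel_measurable M" and V[measurable]: "V \<in> borel_measurable M"
   and Ub: "\<And>\<omega>. \<omega> \<in> space M \<Longrightarrow> \<bar>U \<omega>\<bar> \<le> KU" and Vb: "\<And>\<omega>. \<omega> \<in> space M \<Longrightarrow> \<bar>V \<omega>\<bar> \<le> KV"
   and Y[measurable]: "Y \<in> M \<rightarrow>\<^sub>M borel"
   and ind: "\<And>A. A \<in> sets borel \<Longrightarrow> (\<integral>\<omega>. U \<omega> * indicator A (Y \<omega>) \<partial>M) = (\<integral>\<omega>. V \<omega> * measure (\<xi> c \<omega>) A \<partial>M)"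
   and h[measurable]: "h \<in> borel_measurable borel" and hb: "\<And>x. \<bar>h x\<bar> \<le> Bh"
  shows "(\<integral>\<omega>. U \<omega> * h (Y \<omega>) \<partial>M) = (\<integral>\<omega>. V \<omega> * integral\<^sup>L (\<xi> c \<omega>) h \<partial>M)"
proof -
  interpret prob_space M by (rule prob)
  obtain \<omega>0 where "\<omega>0 \<in> space M" using not_empty by blast
  then have KU: "KU \<ge> 0" "KV \<ge> 0" using Ub Vb by (meson abs_ge_zero order_trans)+
  have key: "\<bar>(\<integral>\<omega>. U \<omega> * h (Y \<omega>) \<partial>M) - (\<integral>\<omega>. V \<omega> * integral\<^sup>L (\<xi> c \<omega>) h \<partial>M)\<bar> \<le> (KU + KV) / real m"
    if m0: "m > 0" for m :: nat
  proof -
    define s where "s x = real_of_int \<lfloor>real m * h x\<rfloor> / real m" for x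
    define N :: int where "N = \<lceil>real m * Bh\<rceil> + 1"
    define C where "C k = {x. \<lfloor>real m * h x\<rfloor> = k}" for k
    have Cm[measurable]: "C k \<in> sets borel" for k
    proof -
      have "(\<lambda>x. \<lfloor>real m * h x\<rfloor>) \<in> borel \<rightarrow>\<^sub>M count_space UNIV" by measurable
      then have "(\<lambda>x. \<lfloor>real m * h x\<rfloor>) -` {k} \<inter> space borel \<in> sets borel"
        by (rule measurable_sets) simp
      then show ?thesis by (simp add: C_def vimage_def)
    qed
    have sm[measurable]: "s \<in> borel_measurable borel" unfolding s_def by measurable
    have range: "\<lfloor>real m * h x\<rfloor> \<in> {-N..N}" for x
    proof -
      have "\<bar>real m * h x\<bar> \<le> real m * Bh" using hb[of x] by (simp add: abs_mult mult_left_mono)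
      then show ?thesis unfolding N_def by (auto; linarith)
    qed
    have s_sum: "s x = (\<Sum>k\<in>{-N..N}. (real_of_int k / real m) * indicator (C k) x)" for x
    proof -
      have "(\<Sum>k\<in>{-N..N}. (real_of_int k / real m) * indicator (C k) x)
          = (\<Sum>k\<in>{-N..N}. if \<lfloor>real m * h x\<rfloor> = k then real_of_int k / real m else 0)"
        by (intro sum.cong) (auto simp: C_def indicator_def)
      also have "\<dots> = s x" using range[of x] by (simp add: sum.delta s_def)
      finally show ?thesis by simp
    qed
    have sd: "\<bar>h x - s x\<bar> \<le> 1 / real m" for x
    proof -
      have "real m * h x - 1 < real_of_int \<lfloor>real m * h x\<rfloor>" "real_of_int \<lfloor>real m * h x\<rfloor> \<le> real m * h x"
        by linarith+
      moreover have "real m * s x = real_of_int \<lfloor>real m * h x\<rfloor>" using m0 by (simp add: s_def)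
      ultimately have "\<bar>real m * h x - real m * s x\<bar> \<le> 1" by linarith
      then have "real m * \<bar>h x - s x\<bar> \<le> 1" by (simp add: abs_mult right_diff_distrib[symmetric])
      then show ?thesis using m0 by (simp add: field_simps)
    qed
    have m1: "1 / real m \<le> 1" using m0 by simp
    have sb: "\<bar>s x\<bar> \<le> Bh + 1" for x using sd[of x] hb[of x] m1 by linarith
    have Cint: "integrable M (\<lambda>\<omega>. U \<omega> * indicator (C k) (Y \<omega>))" for k
      by (rule abs_int_le(2)[where C=KU]) (auto simp: indicator_def Ub KU)
    have Vint: "integrable M (\<lambda>\<omega>. V \<omega> * measure (\<xi> c \<omega>) (C k))" for k
    proof (rule abs_int_le(2)[where C=KV])
      fix \<omega> assume w: "\<omega> \<in> space M"
      have "\<bar>measure (\<xi> c \<omega>) (C k)\<bar> \<le> 1"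
        using xi_space[OF w] by (simp add: prob_space.prob_le_1)
      then have "\<bar>V \<omega>\<bar> * \<bar>measure (\<xi> c \<omega>) (C k)\<bar> \<le> \<bar>V \<omega>\<bar> * 1" by (intro mult_left_mono) auto
      then show "\<bar>V \<omega> * measure (\<xi> c \<omega>) (C k)\<bar> \<le> KV" using Vb[OF w] by (simp add: abs_mult)
    qed measurable
    have L: "(\<integral>\<omega>. U \<omega> * s (Y \<omega>) \<partial>M) = (\<Sum>k\<in>{-N..N}. (real_of_int k / real m) * (\<integral>\<omega>. U \<omega> * indicator (C k) (Y \<omega>) \<partial>M))"
    proof -
      have "(\<integral>\<omega>. U \<omega> * s (Y \<omega>) \<partial>M) = (\<integral>\<omega>. (\<Sum>k\<in>{-N..N}. (real_of_int k / real m) * (U \<omega> * indicator (C k) (Y \<omega>))) \<partial>M)"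
        by (simp add: s_sum sum_distrib_left mult_ac)
      also have "\<dots> = (\<Sum>k\<in>{-N..N}. (real_of_int k / real m) * (\<integral>\<omega>. U \<omega> * indicator (C k) (Y \<omega>) \<partial>M))"
        by (subst Bochner_Integration.integral_sum) (rule integrable_mult_right, rule Cint, simp)
      finally show ?thesis .
    qed
    have xis: "integral\<^sup>L (\<xi> c \<omega>) s = (\<Sum>k\<in>{-N..N}. (real_of_int k / real m) * measure (\<xi> c \<omega>) (C k))"
      if w: "\<omega> \<in> space M" for \<omega>
    proof -
      have sp: "space (\<xi> c \<omega>) = UNIV" using xi_space[OF w] sets_eq_imp_space_eq by force
      have fin: "prob_space (\<xi> c \<omega>)" "sets (\<xi> c \<omega>) = sets borel" using xi_space[OF w] by auto
      have ii: "integrable (\<xi> c \<omega>) (indicator (C k) :: 'a \<Rightarrow> real)" for k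
        using xi_int(2)[OF w, of "indicator (C k)" 1 c] by (auto simp: indicator_def)
      have "integral\<^sup>L (\<xi> c \<omega>) s = (\<integral>x. (\<Sum>k\<in>{-N..N}. (real_of_int k / real m) * indicator (C k) x) \<partial>\<xi> c \<omega>)"
        by (rule arg_cong[where f="integral\<^sup>L (\<xi> c \<omega>)"]) (rule ext, rule s_sum)
      also have "\<dots> = (\<Sum>k\<in>{-N..N}. (real_of_int k / real m) * measure (\<xi> c \<omega>) (C k))"
        by (subst Bochner_Integration.integral_sum) (rule integrable_mult_right, rule ii, simp add: sp)
      finally show ?thesis .
    qed
    have R: "(\<integral>\<omega>. V \<omega> * integral\<^sup>L (\<xi> c \<omega>) s \<partial>M) = (\<Sum>k\<in>{-N..N}. (real_of_int k / real m) * (\<integral>\<omega>. V \<omega> * measure (\<xi> c \<omega>) (C k) \<partial>M))"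
    proof -
      have "(\<integral>\<omega>. V \<omega> * integral\<^sup>L (\<xi> c \<omega>) s \<partial>M) = (\<integral>\<omega>. (\<Sum>k\<in>{-N..N}. (real_of_int k / real m) * (V \<omega> * measure (\<xi> c \<omega>) (C k))) \<partial>M)"
        by (rule Bochner_Integration.integral_cong[OF refl]) (simp add: xis sum_distrib_left mult_ac)
      also have "\<dots> = (\<Sum>k\<in>{-N..N}. (real_of_int k / real m) * (\<integral>\<omega>. V \<omega> * measure (\<xi> c \<omega>) (C k) \<partial>M))"
        by (subst Bochner_Integration.integral_sum) (rule integrable_mult_right, rule Vint, simp)
      finally show ?thesis .
    qed
    have LR: "(\<integral>\<omega>. U \<omega> * s (Y \<omega>) \<partial>M) = (\<integral>\<omega>. V \<omega> * integral\<^sup>L (\<xi> c \<omega>) s \<partial>M)"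
      unfolding L R by (simp add: ind)
    have Uh: "integrable M (\<lambda>\<omega>. U \<omega> * h (Y \<omega>))"
      by (rule abs_int_le(2)[where C="KU * Bh"]) (auto simp: abs_mult KU intro!: mult_mono Ub hb)
    have Us: "integrable M (\<lambda>\<omega>. U \<omega> * s (Y \<omega>))"
      by (rule abs_int_le(2)[where C="KU * (Bh+1)"]) (auto simp: abs_mult KU intro!: mult_mono Ub sb)
    have d1: "\<bar>(\<integral>\<omega>. U \<omega> * h (Y \<omega>) \<partial>M) - (\<integral>\<omega>. U \<omega> * s (Y \<omega>) \<partial>M)\<bar> \<le> KU / real m"
    proof -
      have "(\<integral>\<omega>. U \<omega> * h (Y \<omega>) \<partial>M) - (\<integral>\<omega>. U \<omega> * s (Y \<omega>) \<partial>M) = (\<integral>\<omega>. U \<omega> * (h (Y \<omega>) - s (Y \<omega>)) \<partial>M)"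
        by (subst Bochner_Integration.integral_diff[OF Uh Us, symmetric]) (simp add: right_diff_distrib)
      also have "\<bar>\<dots>\<bar> \<le> KU * (1 / real m)"
      proof (rule abs_int_le(1))
        fix x assume x: "x \<in> space M"
        show "\<bar>U x * (h (Y x) - s (Y x))\<bar> \<le> KU * (1 / real m)"
          unfolding abs_mult by (rule mult_mono[OF Ub[OF x] sd]) (auto simp: KU)
      qed measurable
      finally show ?thesis by simp
    qed
    have xid: "\<bar>integral\<^sup>L (\<xi> c \<omega>) h - integral\<^sup>L (\<xi> c \<omega>) s\<bar> \<le> 1 / real m" if w: "\<omega> \<in> space M" for \<omega>
    proof -
      have "integral\<^sup>L (\<xi> c \<omega>) h - integral\<^sup>L (\<xi> c \<omega>) s = integral\<^sup>L (\<xi> c \<omega>) (\<lambda>x. h x - s x)"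
        using xi_int(2)[OF w h hb] xi_int(2)[OF w sm sb] by (simp add: Bochner_Integration.integral_diff)
      also have "\<bar>\<dots>\<bar> \<le> 1 / real m"
        by (rule xi_int(1)[OF w]) (auto intro: sd)
      finally show ?thesis .
    qed
    have Vh: "integrable M (\<lambda>\<omega>. V \<omega> * integral\<^sup>L (\<xi> c \<omega>) h)"
      by (rule abs_int_le(2)[where C="KV * Bh"]) (auto simp: abs_mult KU intro!: mult_mono Vb xi_int(1)[OF _ h hb])
    have Vs: "integrable M (\<lambda>\<omega>. V \<omega> * integral\<^sup>L (\<xi> c \<omega>) s)"
      by (rule abs_int_le(2)[where C="KV * (Bh+1)"]) (auto simp: abs_mult KU intro!: mult_mono Vb xi_int(1)[OF _ sm sb])
    have d2: "\<bar>(\<integral>\<omega>. V \<omega> * integral\<^sup>L (\<xi> c \<omega>) h \<partial>M) - (\<integral>\<omega>. V \<omega> * integral\<^sup>L (\<xi> c \<omega>) s \<partial>M)\<bar> \<le> KV / real m"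
    proof -
      have "(\<integral>\<omega>. V \<omega> * integral\<^sup>L (\<xi> c \<omega>) h \<partial>M) - (\<integral>\<omega>. V \<omega> * integral\<^sup>L (\<xi> c \<omega>) s \<partial>M)
          = (\<integral>\<omega>. V \<omega> * (integral\<^sup>L (\<xi> c \<omega>) h - integral\<^sup>L (\<xi> c \<omega>) s) \<partial>M)"
        by (subst Bochner_Integration.integral_diff[OF Vh Vs, symmetric]) (simp add: right_diff_distrib)
      also have "\<bar>\<dots>\<bar> \<le> KV * (1 / real m)"
      proof (rule abs_int_le(1))
        fix x assume x: "x \<in> space M"
        show "\<bar>V x * (integral\<^sup>L (\<xi> c x) h - integral\<^sup>L (\<xi> c x) s)\<bar> \<le> KV * (1 / real m)"
          unfolding abs_mult by (rule mult_mono[OF Vb[OF x] xid[OF x]]) (auto simp: KU)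
      qed measurable
      finally show ?thesis by simp
    qed
    show ?thesis using d1 d2 LR by (simp add: add_divide_distrib)
  qed
  show ?thesis using small_zero[OF key] by simp
qed


lemma abs_mult_le: "\<bar>x\<bar> \<le> A \<Longrightarrow> \<bar>y\<bar> \<le> B \<Longrightarrow> \<bar>x * y :: real\<bar> \<le> A * B"
  unfolding abs_mult by (rule mult_mono) (auto intro: order_trans[OF abs_ge_zero])

lemma meas_le1: "\<omega> \<in> space M \<Longrightarrow> \<bar>measure (\<xi> i \<omega>) A\<bar> \<le> 1"
  using xi_space by (simp add: prob_space.prob_le_1)

lemma ind_le1: "\<bar>indicator A x :: real\<bar> \<le> 1"
  by (simp add: indicator_def)

lemma prodfun:
  fixes g h :: "'a \<Rightarrow> real" and W :: "'b \<Rightarrow> real"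
  assumes ab: "a < b" and W[measurable]: "W \<in> borel_measurable F" and Wb: "\<And>\<omega>. \<omega> \<in> space M \<Longrightarrow> \<bar>W \<omega>\<bar> \<le> K"
    and g[measurable]: "g \<in> borel_measurable borel" and gb: "\<And>x. \<bar>g x\<bar> \<le> Bg"
    and h[measurable]: "h \<in> borel_measurable borel" and hb: "\<And>x. \<bar>h x\<bar> \<le> Bh"
  shows "(\<integral>\<omega>. W \<omega> * (g (X a \<omega>) * h (X b \<omega>)) \<partial>M) = (\<integral>\<omega>. W \<omega> * (integral\<^sup>L (\<xi> a \<omega>) g * integral\<^sup>L (\<xi> b \<omega>) h) \<partial>M)"
proof -
  have WM'[measurable]: "W \<in> borel_measurable M" using WM[OF W] .
  have st1: "(\<integral>\<omega>. (W \<omega> * indicator B (X b \<omega>)) * g (X a \<omega>) \<partial>M) = (\<integral>\<omega>. (W \<omega> * measure (\<xi> b \<omega>) B) * integral\<^sup>L (\<xi> a \<omega>) g \<partial>M)"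
    if B[measurable]: "B \<in> sets borel" for B
  proof (rule gen[where KU=K and KV=K and Bh=Bg and c=a])
    show "\<bar>W \<omega> * indicator B (X b \<omega>)\<bar> \<le> K" if "\<omega> \<in> space M" for \<omega>
      using abs_mult_le[OF Wb[OF that] ind_le1] by simp
    show "\<bar>W \<omega> * measure (\<xi> b \<omega>) B\<bar> \<le> K" if "\<omega> \<in> space M" for \<omega>
      using abs_mult_le[OF Wb[OF that] meas_le1[OF that]] by simp
    show "(\<integral>\<omega>. W \<omega> * indicator B (X b \<omega>) * indicator A (X a \<omega>) \<partial>M) = (\<integral>\<omega>. W \<omega> * measure (\<xi> b \<omega>) B * measure (\<xi> a \<omega>) A \<partial>M)"
      if A: "A \<in> sets borel" for A
      using ind2[OF ab A B W Wb] by (simp add: mult_ac)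
  qed (auto intro: gb)
  show ?thesis
  proof -
    have "(\<integral>\<omega>. (W \<omega> * g (X a \<omega>)) * h (X b \<omega>) \<partial>M) = (\<integral>\<omega>. (W \<omega> * integral\<^sup>L (\<xi> a \<omega>) g) * integral\<^sup>L (\<xi> b \<omega>) h \<partial>M)"
    proof (rule gen[where KU="K * Bg" and KV="K * Bg" and Bh=Bh and c=b])
      show "\<bar>W \<omega> * g (X a \<omega>)\<bar> \<le> K * Bg" if "\<omega> \<in> space M" for \<omega>
        using abs_mult_le[OF Wb[OF that] gb] by simp
      show "\<bar>W \<omega> * integral\<^sup>L (\<xi> a \<omega>) g\<bar> \<le> K * Bg" if "\<omega> \<in> space M" for \<omega>
        using abs_mult_le[OF Wb[OF that] xi_int(1)[OF that g gb]] by simp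
      show "(\<integral>\<omega>. W \<omega> * g (X a \<omega>) * indicator A (X b \<omega>) \<partial>M) = (\<integral>\<omega>. W \<omega> * integral\<^sup>L (\<xi> a \<omega>) g * measure (\<xi> b \<omega>) A \<partial>M)"
        if A: "A \<in> sets borel" for A
        using st1[OF A] by (simp add: mult_ac)
    qed (auto intro: hb)
    then show ?thesis by (simp add: mult_ac)
  qed
qed

end

context pdis
begin

definition "Yv f i \<omega> = f (X i \<omega>) - integral\<^sup>L (\<xi> i \<omega>) f"

lemma Yv_meas[measurable]:
  fixes f :: "'a \<Rightarrow> real"
  assumes [measurable]: "f \<in> borel_measurable borel"
  shows "Yv f i \<in> borel_measurable M"
  unfolding Yv_def by measurable

lemma bint:
  fixes \<phi> :: "'b \<Rightarrow> real"
  assumes "\<phi> \<in> borel_measurable M" "\<And>\<omega>. \<omega> \<in> space M \<Longrightarrow> \<bar>\<phi> \<omega>\<bar> \<le> C"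
  shows "integrable M \<phi>"
  by (rule prob_space.abs_int_le(2)[OF prob assms])

lemma xi_one: "\<omega> \<in> space M \<Longrightarrow> integral\<^sup>L (\<xi> i \<omega>) (\<lambda>_. 1::real) = 1"
proof -
  assume "\<omega> \<in> space M"
  then have "prob_space (\<xi> i \<omega>)" using xi_space by auto
  then show ?thesis by (simp add: prob_space.prob_space)
qed

lemma Yv_bound:
  fixes f :: "'a \<Rightarrow> real"
  assumes f: "f \<in> borel_measurable borel" and fb: "\<And>x. \<bar>f x\<bar> \<le> Bf" and w: "\<omega> \<in> space M"
  shows "\<bar>Yv f i \<omega>\<bar> \<le> 2 * Bf"
  using fb[of "X i \<omega>"] xi_int(1)[OF w f fb, of i] unfolding Yv_def by linarith

lemma orth:
  fixes f :: "'a \<Rightarrow> real"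
  assumes ab: "a < b" and f[measurable]: "f \<in> borel_measurable borel" and fb: "\<And>x. \<bar>f x\<bar> \<le> Bf"
  shows "(\<integral>\<omega>. Yv f a \<omega> * Yv f b \<omega> \<partial>M) = 0"
proof -
  have one[measurable]: "(\<lambda>_. 1::real) \<in> borel_measurable borel" by simp
  have oneb: "\<bar>(\<lambda>_. 1::real) x\<bar> \<le> 1" for x :: 'a by simp
  define ma where "ma \<omega> = integral\<^sup>L (\<xi> a \<omega>) f" for \<omega>
  define mb where "mb \<omega> = integral\<^sup>L (\<xi> b \<omega>) f" for \<omega>
  have maF[measurable]: "ma \<in> borel_measurable F" "mb \<in> borel_measurable F"
    unfolding ma_def mb_def by (auto intro: intF f)
  have maM[measurable]: "ma \<in> borel_measurable M" "mb \<in> borel_measurable M"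
    using maF by (auto intro: WM)
  have mab: "\<bar>ma \<omega>\<bar> \<le> Bf" "\<bar>mb \<omega>\<bar> \<le> Bf" if "\<omega> \<in> space M" for \<omega>
    unfolding ma_def mb_def using xi_int(1)[OF that f fb] by auto
  have fab: "\<bar>f (X a \<omega>)\<bar> \<le> Bf" "\<bar>f (X b \<omega>)\<bar> \<le> Bf" for \<omega> using fb by auto
  have P1: "(\<integral>\<omega>. f (X a \<omega>) * f (X b \<omega>) \<partial>M) = (\<integral>\<omega>. ma \<omega> * mb \<omega> \<partial>M)"
    using prodfun[OF ab _ _ f fb f fb, of "\<lambda>_. 1" 1] unfolding ma_def mb_def by simp
  have P2: "(\<integral>\<omega>. f (X a \<omega>) * mb \<omega> \<partial>M) = (\<integral>\<omega>. ma \<omega> * mb \<omega> \<partial>M)"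
  proof -
    have "(\<integral>\<omega>. mb \<omega> * (f (X a \<omega>) * 1) \<partial>M) = (\<integral>\<omega>. mb \<omega> * (ma \<omega> * integral\<^sup>L (\<xi> b \<omega>) (\<lambda>_. 1)) \<partial>M)"
      using prodfun[OF ab maF(2) mab(2) f fb one oneb] unfolding ma_def by simp
    also have "\<dots> = (\<integral>\<omega>. ma \<omega> * mb \<omega> \<partial>M)"
      by (rule Bochner_Integration.integral_cong[OF refl]) (simp add: xi_one del: lebesgue_integral_const)
    finally show ?thesis by (simp add: mult.commute)
  qed
  have P3: "(\<integral>\<omega>. ma \<omega> * f (X b \<omega>) \<partial>M) = (\<integral>\<omega>. ma \<omega> * mb \<omega> \<partial>M)"
  proof -
    have "(\<integral>\<omega>. ma \<omega> * (1 * f (X b \<omega>)) \<partial>M) = (\<integral>\<omega>. ma \<omega> * (integral\<^sup>L (\<xi> a \<omega>) (\<lambda>_. 1) * mb \<omega>) \<partial>M)"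
      using prodfun[OF ab maF(1) mab(1) one oneb f fb] unfolding mb_def by simp
    also have "\<dots> = (\<integral>\<omega>. ma \<omega> * mb \<omega> \<partial>M)"
      by (rule Bochner_Integration.integral_cong[OF refl]) (simp add: xi_one del: lebesgue_integral_const)
    finally show ?thesis by simp
  qed
  have i1: "integrable M (\<lambda>\<omega>. f (X a \<omega>) * f (X b \<omega>))"
    by (rule bint[where C="Bf*Bf"]) (auto intro: abs_mult_le fab)
  have i2: "integrable M (\<lambda>\<omega>. f (X a \<omega>) * mb \<omega>)"
    by (rule bint[where C="Bf*Bf"]) (auto intro: abs_mult_le fab mab)
  have i3: "integrable M (\<lambda>\<omega>. ma \<omega> * f (X b \<omega>))"
    by (rule bint[where C="Bf*Bf"]) (auto intro: abs_mult_le fab mab)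
  have i4: "integrable M (\<lambda>\<omega>. ma \<omega> * mb \<omega>)"
    by (rule bint[where C="Bf*Bf"]) (auto intro: abs_mult_le fab mab)
  have "(\<integral>\<omega>. Yv f a \<omega> * Yv f b \<omega> \<partial>M)
      = (\<integral>\<omega>. ((f (X a \<omega>) * f (X b \<omega>) - f (X a \<omega>) * mb \<omega>) - ma \<omega> * f (X b \<omega>)) + ma \<omega> * mb \<omega> \<partial>M)"
    by (rule Bochner_Integration.integral_cong[OF refl]) (simp add: Yv_def ma_def mb_def algebra_simps)
  also have "\<dots> = (((\<integral>\<omega>. f (X a \<omega>) * f (X b \<omega>) \<partial>M) - (\<integral>\<omega>. f (X a \<omega>) * mb \<omega> \<partial>M))
        - (\<integral>\<omega>. ma \<omega> * f (X b \<omega>) \<partial>M)) + (\<integral>\<omega>. ma \<omega> * mb \<omega> \<partial>M)"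
    using i1 i2 i3 i4 by (simp add: Bochner_Integration.integral_add Bochner_Integration.integral_diff)
  also have "\<dots> = 0" unfolding P1 P2 P3 by simp
  finally show ?thesis .
qed


lemma second_moment:
  fixes f :: "'a \<Rightarrow> real"
  assumes f[measurable]: "f \<in> borel_measurable borel" and fb: "\<And>x. \<bar>f x\<bar> \<le> Bf"
  shows "(\<integral>\<omega>. (\<Sum>i<n. Yv f i \<omega>)\<^sup>2 \<partial>M) \<le> real n * (4 * Bf\<^sup>2)"
proof -
  have Yb: "\<bar>Yv f i \<omega>\<bar> \<le> 2 * Bf" if "\<omega> \<in> space M" for i \<omega> using Yv_bound[OF f fb that] .
  have ip: "integrable M (\<lambda>\<omega>. Yv f i \<omega> * Yv f j \<omega>)" for i j
  proof (rule bint[where C="2*Bf*(2*Bf)"])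
    fix \<omega> assume w: "\<omega> \<in> space M"
    show "\<bar>Yv f i \<omega> * Yv f j \<omega>\<bar> \<le> 2*Bf*(2*Bf)" by (rule abs_mult_le[OF Yb[OF w] Yb[OF w]])
  qed measurable
  have o: "(\<integral>\<omega>. Yv f i \<omega> * Yv f j \<omega> \<partial>M) = 0" if "i \<noteq> j" for i j
  proof (cases "i < j")
    case True then show ?thesis using orth[OF True f fb] by simp
  next
    case False
    then have "j < i" using that by simp
    then show ?thesis using orth[OF _ f fb, of j i] by (simp add: mult.commute)
  qed
  have "(\<integral>\<omega>. (\<Sum>i<n. Yv f i \<omega>)\<^sup>2 \<partial>M) = (\<integral>\<omega>. (\<Sum>i<n. \<Sum>j<n. Yv f i \<omega> * Yv f j \<omega>) \<partial>M)"
    by (simp add: power2_eq_square sum_product)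
  also have "\<dots> = (\<Sum>i<n. \<Sum>j<n. (\<integral>\<omega>. Yv f i \<omega> * Yv f j \<omega> \<partial>M))"
    by (simp add: Bochner_Integration.integral_sum integrable_sum ip)
  also have "\<dots> = (\<Sum>i<n. (\<integral>\<omega>. Yv f i \<omega> * Yv f i \<omega> \<partial>M))"
  proof (rule sum.cong[OF refl])
    fix i assume i: "i \<in> {..<n}"
    have "(\<Sum>j<n. (\<integral>\<omega>. Yv f i \<omega> * Yv f j \<omega> \<partial>M)) = (\<Sum>j<n. if j = i then (\<integral>\<omega>. Yv f i \<omega> * Yv f i \<omega> \<partial>M) else 0)"
      by (rule sum.cong[OF refl]) (auto simp: o)
    also have "\<dots> = (\<integral>\<omega>. Yv f i \<omega> * Yv f i \<omega> \<partial>M)" using i by (simp add: sum.delta')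
    finally show "(\<Sum>j<n. (\<integral>\<omega>. Yv f i \<omega> * Yv f j \<omega> \<partial>M)) = (\<integral>\<omega>. Yv f i \<omega> * Yv f i \<omega> \<partial>M)" .
  qed
  also have "\<dots> \<le> (\<Sum>i<n. 4 * Bf\<^sup>2)"
  proof (rule sum_mono)
    fix i
    have "\<bar>(\<integral>\<omega>. Yv f i \<omega> * Yv f i \<omega> \<partial>M)\<bar> \<le> 2*Bf*(2*Bf)"
    proof (rule prob_space.abs_int_le(1)[OF prob])
      fix \<omega> assume w: "\<omega> \<in> space M"
      show "\<bar>Yv f i \<omega> * Yv f i \<omega>\<bar> \<le> 2*Bf*(2*Bf)" by (rule abs_mult_le[OF Yb[OF w] Yb[OF w]])
    qed measurable
    then show "(\<integral>\<omega>. Yv f i \<omega> * Yv f i \<omega> \<partial>M) \<le> 4 * Bf\<^sup>2" by (simp add: power2_eq_square)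
  qed
  also have "\<dots> = real n * (4 * Bf\<^sup>2)" by simp
  finally show ?thesis .
qed

lemma ae_sub:
  fixes f :: "'a \<Rightarrow> real"
  assumes f[measurable]: "f \<in> borel_measurable borel" and fb: "\<And>x. \<bar>f x\<bar> \<le> Bf"
  shows "AE \<omega> in M. (\<lambda>k. (\<Sum>i<(Suc k)\<^sup>2. Yv f i \<omega>) / real ((Suc k)\<^sup>2)) \<longlonglongrightarrow> 0"
proof -
  define Z where "Z k \<omega> = ((\<Sum>i<(Suc k)\<^sup>2. Yv f i \<omega>) / real ((Suc k)\<^sup>2))\<^sup>2" for k \<omega>
  define c where "c k = 4 * Bf\<^sup>2 / real ((Suc k)\<^sup>2)" for k
  have Zm[measurable]: "Z k \<in> borel_measurable M" for k unfolding Z_def by measurable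
  have Yb: "\<bar>Yv f i \<omega>\<bar> \<le> 2 * Bf" if "\<omega> \<in> space M" for i \<omega> using Yv_bound[OF f fb that] .
  have Sb: "\<bar>(\<Sum>i<n. Yv f i \<omega>)\<bar> \<le> real n * (2 * Bf)" if "\<omega> \<in> space M" for n \<omega>
  proof -
    have "\<bar>(\<Sum>i<n. Yv f i \<omega>)\<bar> \<le> (\<Sum>i<n. \<bar>Yv f i \<omega>\<bar>)" by (rule sum_abs)
    also have "\<dots> \<le> real (card {..<n}) * (2 * Bf)" by (rule sum_bounded_above) (rule Yb[OF that])
    finally show ?thesis by simp
  qed
  have Zint: "integrable M (Z k)" for k
  proof (rule bint[where C="(2*Bf)\<^sup>2"])
    fix \<omega> assume w: "\<omega> \<in> space M"
    let ?N = "real ((Suc k)\<^sup>2)"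
    have Np: "?N > 0" by simp
    have "\<bar>(\<Sum>i<(Suc k)\<^sup>2. Yv f i \<omega>) / ?N\<bar> \<le> 2 * Bf"
    proof -
      have "\<bar>\<Sum>i<(Suc k)\<^sup>2. Yv f i \<omega>\<bar> \<le> (2 * Bf) * ?N" using Sb[OF w, of "(Suc k)\<^sup>2"] by (simp only: mult.commute)
      then show ?thesis using Np by (simp only: abs_divide abs_of_nat pos_divide_le_eq)
    qed
    then have "\<bar>(\<Sum>i<(Suc k)\<^sup>2. Yv f i \<omega>) / ?N\<bar>\<^sup>2 \<le> (2*Bf)\<^sup>2"
      by (rule power_mono) simp
    moreover have "Z k \<omega> = \<bar>(\<Sum>i<(Suc k)\<^sup>2. Yv f i \<omega>) / ?N\<bar>\<^sup>2" unfolding Z_def by (simp only: power2_abs)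
    ultimately show "\<bar>Z k \<omega>\<bar> \<le> (2*Bf)\<^sup>2" by simp
  qed measurable
  have Zle: "(\<integral>\<omega>. Z k \<omega> \<partial>M) \<le> c k" for k
  proof -
    let ?N = "real ((Suc k)\<^sup>2)"
    have Np: "?N > 0" by simp
    have "(\<integral>\<omega>. Z k \<omega> \<partial>M) = (\<integral>\<omega>. (\<Sum>i<(Suc k)\<^sup>2. Yv f i \<omega>)\<^sup>2 \<partial>M) / ?N\<^sup>2"
      unfolding Z_def by (simp add: power_divide)
    also have "\<dots> \<le> (?N * (4 * Bf\<^sup>2)) / ?N\<^sup>2"
      by (rule divide_right_mono[OF second_moment[OF f fb]]) simp
    also have "\<dots> = c k" unfolding c_def using Np by (simp add: power2_eq_square)
    finally show ?thesis .
  qed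
  have csum: "summable c"
  proof -
    have "summable (\<lambda>n. inverse (real n ^ 2))" by (rule inverse_power_summable) simp
    then have "summable (\<lambda>n. inverse (real (n + 1) ^ 2))" by (rule summable_ignore_initial_segment)
    then have "summable (\<lambda>n. 4 * Bf\<^sup>2 * inverse (real (n + 1) ^ 2))" by (rule summable_mult)
    then show ?thesis unfolding c_def by (simp add: divide_inverse)
  qed
  have c0: "c k \<ge> 0" for k unfolding c_def by simp
  have Z0: "Z k \<omega> \<ge> 0" for k \<omega> unfolding Z_def by simp
  have "(\<integral>\<^sup>+\<omega>. (\<Sum>k. ennreal (Z k \<omega>)) \<partial>M) = (\<Sum>k. (\<integral>\<^sup>+\<omega>. ennreal (Z k \<omega>) \<partial>M))"
    by (rule nn_integral_suminf) measurable
  also have "\<dots> = (\<Sum>k. ennreal (\<integral>\<omega>. Z k \<omega> \<partial>M))"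
    by (rule arg_cong[where f=suminf], rule ext, rule nn_integral_eq_integral[OF Zint]) (simp add: Z0)
  also have "\<dots> \<le> (\<Sum>k. ennreal (c k))"
    by (rule suminf_le) (auto intro: ennreal_leI Zle)
  also have "\<dots> = ennreal (\<Sum>k. c k)" by (rule suminf_ennreal2[OF c0 csum])
  finally have fin: "(\<integral>\<^sup>+\<omega>. (\<Sum>k. ennreal (Z k \<omega>)) \<partial>M) \<noteq> \<infinity>"
    using neq_top_trans[OF ennreal_neq_top] unfolding infinity_ennreal_def by blast
  have "AE \<omega> in M. (\<Sum>k. ennreal (Z k \<omega>)) \<noteq> \<infinity>"
    by (rule nn_integral_noteq_infinite[OF _ fin]) measurable
  then show ?thesis
  proof (rule AE_mp, intro AE_I2 impI)
    fix \<omega> assume "(\<Sum>k. ennreal (Z k \<omega>)) \<noteq> \<infinity>"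
    then have "summable (\<lambda>k. Z k \<omega>)" using summable_suminf_not_top[of "\<lambda>k. Z k \<omega>"] Z0 by auto
    then have "(\<lambda>k. Z k \<omega>) \<longlonglongrightarrow> 0" by (rule summable_LIMSEQ_zero)
    then have "(\<lambda>k. sqrt (Z k \<omega>)) \<longlonglongrightarrow> sqrt 0" by (rule tendsto_real_sqrt)
    then have "(\<lambda>k. \<bar>(\<Sum>i<(Suc k)\<^sup>2. Yv f i \<omega>) / real ((Suc k)\<^sup>2)\<bar>) \<longlonglongrightarrow> 0" unfolding Z_def by simp
    then show "(\<lambda>k. (\<Sum>i<(Suc k)\<^sup>2. Yv f i \<omega>) / real ((Suc k)\<^sup>2)) \<longlonglongrightarrow> 0"
      by (rule tendsto_rabs_zero_cancel)
  qed
qed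

end

theorem theorem1:
  fixes M :: "'b measure"
    and X :: "nat \<Rightarrow> 'b \<Rightarrow> 'a::metric_space"
    and \<xi> :: "nat \<Rightarrow> 'b \<Rightarrow> 'a measure"
    and f :: "'a \<Rightarrow> real"
  assumes "compact (UNIV :: 'a set)"
    and "prob_space M"
    and "\<And>i. X i \<in> M \<rightarrow>\<^sub>M borel"
    and "product_disintegration M X \<xi>"
    and "continuous_on UNIV f"
  shows "(AE \<omega> in M. (\<lambda>n. (\<Sum>i<n. f (X i \<omega>) - integral\<^sup>L (\<xi> i \<omega>) f) / real n) \<longlonglongrightarrow> 0)
    \<and> ((AE \<omega> in M. convergent (\<lambda>n. (\<Sum>i<n. f (X i \<omega>)) / real n))
         \<longleftrightarrow> (AE \<omega> in M. convergent (\<lambda>n. (\<Sum>i<n. integral\<^sup>L (\<xi> i \<omega>) f) / real n)))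
    \<and> ((AE \<omega> in M. convergent (\<lambda>n. (\<Sum>i<n. f (X i \<omega>)) / real n)) \<longrightarrow>
         (AE \<omega> in M. lim (\<lambda>n. (\<Sum>i<n. f (X i \<omega>)) / real n)
                    = lim (\<lambda>n. (\<Sum>i<n. integral\<^sup>L (\<xi> i \<omega>) f) / real n)))"
proof -
  interpret pdis M X \<xi> by (rule pdis.intro[OF assms(2-4)])
  have fm[measurable]: "f \<in> borel_measurable borel" by (rule borel_measurable_continuous_onI[OF assms(5)])
  have "compact (f ` UNIV)" by (rule compact_continuous_image[OF assms(5) assms(1)])
  then have "bounded (f ` UNIV)" by (rule compact_imp_bounded)
  then obtain Bf where Bf: "\<And>x. \<bar>f x\<bar> \<le> Bf" unfolding bounded_iff by auto
  have P1: "AE \<omega> in M. (\<lambda>n. (\<Sum>i<n. f (X i \<omega>) - integral\<^sup>L (\<xi> i \<omega>) f) / real n) \<longlonglongrightarrow> 0"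
    using ae_sub[OF fm Bf] AE_space
  proof eventually_elim
    case (elim \<omega>)
    have "(\<lambda>n. (\<Sum>i<n. Yv f i \<omega>) / real n) \<longlonglongrightarrow> 0"
      by (rule det_slln[where C="2*Bf"]) (use Yv_bound[OF fm Bf elim(2)] elim(1) in auto)
    then show ?case unfolding Yv_def .
  qed
  have D: "(\<lambda>n. (\<Sum>i<n. f (X i \<omega>)) / real n) = (\<lambda>n. (\<Sum>i<n. integral\<^sup>L (\<xi> i \<omega>) f) / real n + (\<Sum>i<n. f (X i \<omega>) - integral\<^sup>L (\<xi> i \<omega>) f) / real n)" for \<omega>
    by (rule ext) (simp add: sum_subtractf diff_divide_distrib)
  have D2: "(\<lambda>n. (\<Sum>i<n. integral\<^sup>L (\<xi> i \<omega>) f) / real n) = (\<lambda>n. (\<Sum>i<n. f (X i \<omega>)) / real n - (\<Sum>i<n. f (X i \<omega>) - integral\<^sup>L (\<xi> i \<omega>) f) / real n)" for \<omega>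
    by (rule ext) (simp add: sum_subtractf diff_divide_distrib)
  have eq: "AE \<omega> in M. (convergent (\<lambda>n. (\<Sum>i<n. f (X i \<omega>)) / real n) \<longleftrightarrow> convergent (\<lambda>n. (\<Sum>i<n. integral\<^sup>L (\<xi> i \<omega>) f) / real n))
     \<and> (convergent (\<lambda>n. (\<Sum>i<n. f (X i \<omega>)) / real n) \<longrightarrow> lim (\<lambda>n. (\<Sum>i<n. f (X i \<omega>)) / real n) = lim (\<lambda>n. (\<Sum>i<n. integral\<^sup>L (\<xi> i \<omega>) f) / real n))"
    using P1
  proof eventually_elim
    case (elim \<omega>)
    show ?case
    proof (intro conjI impI iffI)
      assume "convergent (\<lambda>n. (\<Sum>i<n. f (X i \<omega>)) / real n)"
      then obtain L where L: "(\<lambda>n. (\<Sum>i<n. f (X i \<omega>)) / real n) \<longlonglongrightarrow> L" by (auto simp: convergent_def)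
      have "(\<lambda>n. (\<Sum>i<n. integral\<^sup>L (\<xi> i \<omega>) f) / real n) \<longlonglongrightarrow> L - 0"
        unfolding D2 by (intro tendsto_diff L elim)
      then show "convergent (\<lambda>n. (\<Sum>i<n. integral\<^sup>L (\<xi> i \<omega>) f) / real n)" by (auto simp: convergent_def)
    next
      assume "convergent (\<lambda>n. (\<Sum>i<n. integral\<^sup>L (\<xi> i \<omega>) f) / real n)"
      then obtain L where L: "(\<lambda>n. (\<Sum>i<n. integral\<^sup>L (\<xi> i \<omega>) f) / real n) \<longlonglongrightarrow> L" by (auto simp: convergent_def)
      have "(\<lambda>n. (\<Sum>i<n. f (X i \<omega>)) / real n) \<longlonglongrightarrow> L + 0"
        unfolding D by (intro tendsto_add L elim)
      then show "convergent (\<lambda>n. (\<Sum>i<n. f (X i \<omega>)) / real n)" by (auto simp: convergent_def)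
    next
      assume "convergent (\<lambda>n. (\<Sum>i<n. f (X i \<omega>)) / real n)"
      then obtain L where L: "(\<lambda>n. (\<Sum>i<n. f (X i \<omega>)) / real n) \<longlonglongrightarrow> L" by (auto simp: convergent_def)
      have "(\<lambda>n. (\<Sum>i<n. integral\<^sup>L (\<xi> i \<omega>) f) / real n) \<longlonglongrightarrow> L - 0"
        unfolding D2 by (intro tendsto_diff L elim)
      then show "lim (\<lambda>n. (\<Sum>i<n. f (X i \<omega>)) / real n) = lim (\<lambda>n. (\<Sum>i<n. integral\<^sup>L (\<xi> i \<omega>) f) / real n)"
        using L by (simp add: limI)
    qed
  qed
  have P2: "(AE \<omega> in M. convergent (\<lambda>n. (\<Sum>i<n. f (X i \<omega>)) / real n))
         \<longleftrightarrow> (AE \<omega> in M. convergent (\<lambda>n. (\<Sum>i<n. integral\<^sup>L (\<xi> i \<omega>) f) / real n))"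
  proof
    assume "AE \<omega> in M. convergent (\<lambda>n. (\<Sum>i<n. f (X i \<omega>)) / real n)"
    then show "AE \<omega> in M. convergent (\<lambda>n. (\<Sum>i<n. integral\<^sup>L (\<xi> i \<omega>) f) / real n)"
      using eq by eventually_elim auto
  next
    assume "AE \<omega> in M. convergent (\<lambda>n. (\<Sum>i<n. integral\<^sup>L (\<xi> i \<omega>) f) / real n)"
    then show "AE \<omega> in M. convergent (\<lambda>n. (\<Sum>i<n. f (X i \<omega>)) / real n)"
      using eq by eventually_elim auto
  qed
  have P3: "(AE \<omega> in M. convergent (\<lambda>n. (\<Sum>i<n. f (X i \<omega>)) / real n)) \<longrightarrow>
         (AE \<omega> in M. lim (\<lambda>n. (\<Sum>i<n. f (X i \<omega>)) / real n)
                    = lim (\<lambda>n. (\<Sum>i<n. integral\<^sup>L (\<xi> i \<omega>) f) / real n))"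
  proof
    assume "AE \<omega> in M. convergent (\<lambda>n. (\<Sum>i<n. f (X i \<omega>)) / real n)"
    then show "AE \<omega> in M. lim (\<lambda>n. (\<Sum>i<n. f (X i \<omega>)) / real n) = lim (\<lambda>n. (\<Sum>i<n. integral\<^sup>L (\<xi> i \<omega>) f) / real n)"
      using eq by eventually_elim auto
  qed
  show ?thesis using P1 P2 P3 by blast
qed

end
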